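(* Let $\mathcal{T}\subset\mathbb{R}$ be a compact interval of positive length $|\mathcal{T}|$, let $y_1,\dots,y_n$ and $g$ be continuous real functions on $\mathcal{T}$, and let $\alpha\in[1/(l+1),1)$. Define $k$, $\mathcal{H}_2$ and $M$ as in the context, and assume $M(t)>0$ for all $t\in\mathcal{T}$. Let $$\bar s^c(t):=\frac{M(t)}{\int_{\mathcal{T}}M(u)\,du},\qquad s^0(t):=\frac{1}{|\mathcal{T}|}.$$ Then $\mathcal{Q}(s^0)\ge\mathcal{Q}(\bar s^c)$. Moreover, $\mathcal{Q}(s^0)=\mathcal{Q}(\bar s^c)$ if and only if $M$ is constant almost everywhere on $\mathcal{T}$.
   Context: $\{1,\dots,n\}$ is partitioned into $\mathcal{I}_1$ with $|\mathcal{I}_1|=m\ge1$ and $\mathcal{I}_2$ with $|\mathcal{I}_2|=l\ge1$. Put $r:=\lceil (l+1)(1-\alpha)\rceil$. Let $k$ be the $r$-th smallest value of the multiset $\{\sup_{t\in\mathcal{T}}|y_h(t)-g(t)|:h\in\mathcal{I}_2\}$. Define $$\mathcal{H}_2:=\{j\in\mathcal{I}_2:\sup_{t\in\mathcal{T}}|y_j(t)-g(t)|\le k\},\qquad M(t):=\max_{j\in\mathcal{H}_2}|y_j(t)-g(t)|.$$ For a bounded function $u:\mathcal{T}\to(0,\infty)$, define the scores $R^u_h:=\sup_{t\in\mathcal{T}}|y_h(t)-g(t)|/u(t)$ for $h\in\mathcal{I}_2$. Let $k^u$ be the $r$-th smallest value of $\{R^u_h:h\in\mathcal{I}_2\}$.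 The size of the band is $\mathcal{Q}(u):=\int_{\mathcal{T}}2k^u u(t)\,dt$; this equals $2k^u$ when $\int_{\mathcal{T}}u=1$. *)

theory Defs
  imports "HOL-Analysis.Analysis" "HOL-Library.Multiset"
begin

definition kth_smallest :: "nat \<Rightarrow> ('b \<Rightarrow> real) \<Rightarrow> 'b set \<Rightarrow> real" where
  "kth_smallest r f I = sorted_list_of_multiset (image_mset f (mset_set I)) ! (r - 1)"

definition conf_rank :: "nat \<Rightarrow> real \<Rightarrow> nat" where
  "conf_rank l \<alpha> = nat \<lceil>(real l + 1) * (1 - \<alpha>)\<rceil>"

definition score :: "real set \<Rightarrow> (nat \<Rightarrow> real \<Rightarrow> real) \<Rightarrow> (real \<Rightarrow> real) \<Rightarrow> (real \<Rightarrow> real) \<Rightarrow> nat \<Rightarrow> real" where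
  "score T y g u h = Sup ((\<lambda>t. \<bar>y h t - g t\<bar> / u t) ` T)"

definition sup_dev :: "real set \<Rightarrow> (nat \<Rightarrow> real \<Rightarrow> real) \<Rightarrow> (real \<Rightarrow> real) \<Rightarrow> nat \<Rightarrow> real" where
  "sup_dev T y g h = Sup ((\<lambda>t. \<bar>y h t - g t\<bar>) ` T)"

definition kval :: "real set \<Rightarrow> nat set \<Rightarrow> nat \<Rightarrow> (nat \<Rightarrow> real \<Rightarrow> real) \<Rightarrow> (real \<Rightarrow> real) \<Rightarrow> real" where
  "kval T I2 r y g = kth_smallest r (sup_dev T y g) I2"

definition H2set :: "real set \<Rightarrow> nat set \<Rightarrow> nat \<Rightarrow> (nat \<Rightarrow> real \<Rightarrow> real) \<Rightarrow> (real \<Rightarrow> real) \<Rightarrow> nat set" where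
  "H2set T I2 r y g = {j \<in> I2. sup_dev T y g j \<le> kval T I2 r y g}"

definition Mfun :: "real set \<Rightarrow> nat set \<Rightarrow> nat \<Rightarrow> (nat \<Rightarrow> real \<Rightarrow> real) \<Rightarrow> (real \<Rightarrow> real) \<Rightarrow> real \<Rightarrow> real" where
  "Mfun T I2 r y g t = Max ((\<lambda>j. \<bar>y j t - g t\<bar>) ` H2set T I2 r y g)"

definition band_size :: "real set \<Rightarrow> nat set \<Rightarrow> nat \<Rightarrow> (nat \<Rightarrow> real \<Rightarrow> real) \<Rightarrow> (real \<Rightarrow> real) \<Rightarrow> (real \<Rightarrow> real) \<Rightarrow> real" where
  "band_size T I2 r y g u = integral T (\<lambda>t. 2 * kth_smallest r (score T y g u) I2 * u t)"

end

theory Submission imports Defs begin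
lemma kth_cong:
  assumes "\<And>h. h \<in> I \<Longrightarrow> f h = f' h"
  shows "kth_smallest r f I = kth_smallest r f' I"
proof -
  have "image_mset f (mset_set I) = image_mset f' (mset_set I)"
    by (cases "finite I") (auto intro!: image_mset_cong simp: assms)
  thus ?thesis unfolding kth_smallest_def by simp
qed

lemma kth_scale:
  fixes f :: "'b \<Rightarrow> real"
  assumes c: "c > 0" and r: "1 \<le> r" "r \<le> card I"
  shows "kth_smallest r (\<lambda>h. c * f h) I = c * kth_smallest r f I"
proof -
  define xs where "xs = sorted_list_of_multiset (image_mset f (mset_set I))"
  have len: "length xs = card I" unfolding xs_def
    by (metis mset_sorted_list_of_multiset size_image_mset size_mset size_mset_set)
  have "image_mset (\<lambda>h. c * f h) (mset_set I) = image_mset (\<lambda>x. c * x) (mset xs)"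
    unfolding xs_def by (simp add: multiset.map_comp comp_def)
  also have "\<dots> = mset (map (\<lambda>x. c * x) xs)" by simp
  finally have e: "image_mset (\<lambda>h. c * f h) (mset_set I) = mset (map (\<lambda>x. c * x) xs)" .
  have s: "sorted (map (\<lambda>x. c * x) xs)"
    unfolding xs_def using c
    by (auto simp: sorted_map intro: sorted_wrt_mono_rel[OF _ sorted_sorted_list_of_multiset])
  have "sorted_list_of_multiset (image_mset (\<lambda>h. c * f h) (mset_set I)) = map (\<lambda>x. c * x) xs"
    unfolding e sorted_list_of_multiset_mset using s by (simp add: sorted_sort_id)
  thus ?thesis unfolding kth_smallest_def xs_def[symmetric] using r len by simp
qed

lemma card_filter_eq:
  assumes "finite I"
  shows "card {h\<in>I. P (f h)} = length (filter P (sorted_list_of_multiset (image_mset f (mset_set I))))"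
proof -
  have "length (filter P (sorted_list_of_multiset (image_mset f (mset_set I))))
      = size (filter_mset P (mset (sorted_list_of_multiset (image_mset f (mset_set I)))))"
    by (metis mset_filter size_mset)
  also have "\<dots> = size (filter_mset P (image_mset f (mset_set I)))" by simp
  also have "\<dots> = size (image_mset f (filter_mset (\<lambda>x. P (f x)) (mset_set I)))"
    by (simp add: filter_mset_image_mset)
  also have "\<dots> = card {h\<in>I. P (f h)}" using assms by simp
  finally show ?thesis by simp
qed

lemma sorted_filter_ge:
  fixes xs :: "real list"
  assumes "sorted xs" "1 \<le> r" "r \<le> length xs"
  shows "r \<le> length (filter (\<lambda>x. x \<le> xs ! (r - 1)) xs)"
proof -
  have "\<forall>x\<in>set (take r xs). x \<le> xs ! (r - 1)"
  proof
    fix x assume "x \<in> set (take r xs)"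
    then obtain i where i: "i < length (take r xs)" "x = take r xs ! i" by (metis in_set_conv_nth)
    hence "x = xs ! i" "i \<le> r - 1" by auto
    thus "x \<le> xs ! (r - 1)" using assms sorted_nth_mono by (metis diff_less le_less_trans less_one not_le)
  qed
  hence "filter (\<lambda>x. x \<le> xs ! (r - 1)) (take r xs) = take r xs" by simp
  hence "r = length (filter (\<lambda>x. x \<le> xs ! (r - 1)) (take r xs))" using assms by simp
  also have "\<dots> \<le> length (filter (\<lambda>x. x \<le> xs ! (r - 1)) xs)"
    by (metis append_take_drop_id filter_append le_add1 length_append)
  finally show ?thesis .
qed

lemma sorted_filter_le:
  fixes xs :: "real list"
  assumes "sorted xs" "1 \<le> r" "r \<le> length (filter (\<lambda>x. x \<le> v) xs)"
  shows "xs ! (r - 1) \<le> v"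
proof (rule ccontr)
  assume "\<not> ?thesis"
  hence v: "v < xs ! (r - 1)" by simp
  have rl: "r \<le> length xs" using assms(3) by (metis length_filter_le order_trans)
  have "filter (\<lambda>x. x \<le> v) (drop (r - 1) xs) = []"
  proof -
    have "\<forall>x\<in>set (drop (r - 1) xs). \<not> x \<le> v"
    proof
      fix x assume "x \<in> set (drop (r - 1) xs)"
      then obtain i where i: "i < length (drop (r - 1) xs)" "x = drop (r - 1) xs ! i" by (metis in_set_conv_nth)
      hence "x = xs ! (r - 1 + i)" "r - 1 + i < length xs" by auto
      hence "xs ! (r - 1) \<le> x" using assms(1) sorted_nth_mono by (metis le_add1)
      thus "\<not> x \<le> v" using v by simp
    qed
    thus ?thesis by (simp add: filter_empty_conv)
  qed
  hence "length (filter (\<lambda>x. x \<le> v) xs) = length (filter (\<lambda>x. x \<le> v) (take (r - 1) xs))"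
    by (metis append_Nil2 append_take_drop_id filter_append)
  also have "\<dots> \<le> r - 1" by (metis length_filter_le length_take min.boundedE order_trans le_refl min_def)
  finally show False using assms by simp
qed

lemma kth_le:
  fixes f :: "'b \<Rightarrow> real"
  assumes "finite I" "1 \<le> r" "r \<le> card {h\<in>I. f h \<le> v}"
  shows "kth_smallest r f I \<le> v"
  unfolding kth_smallest_def
  by (rule sorted_filter_le) (use assms card_filter_eq[of I "\<lambda>x. x \<le> v" f] in auto)

lemma card_le_kth:
  fixes f :: "'b \<Rightarrow> real"
  assumes "finite I" "1 \<le> r" "r \<le> card I"
  shows "r \<le> card {h\<in>I. f h \<le> kth_smallest r f I}"
proof -
  define xs where "xs = sorted_list_of_multiset (image_mset f (mset_set I))"
  have len: "length xs = card I" unfolding xs_def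
    by (metis mset_sorted_list_of_multiset size_image_mset size_mset size_mset_set)
  have "r \<le> length (filter (\<lambda>x. x \<le> xs ! (r - 1)) xs)"
    by (rule sorted_filter_ge) (use assms len in \<open>auto simp: xs_def\<close>)
  thus ?thesis using card_filter_eq[OF assms(1), of "\<lambda>x. x \<le> xs ! (r - 1)" f]
    unfolding kth_smallest_def xs_def by simp
qed

lemma continuous_on_Max_fam:
  fixes F :: "'j \<Rightarrow> real \<Rightarrow> real"
  assumes "finite S" "S \<noteq> {}" "\<And>j. j \<in> S \<Longrightarrow> continuous_on T (F j)"
  shows "continuous_on T (\<lambda>t. Max ((\<lambda>j. F j t) ` S))"
  using assms
proof (induction S rule: finite_ne_induct)
  case (singleton x) thus ?case by simp
next
  case (insert x S)
  have "continuous_on T (\<lambda>t. max (F x t) (Max ((\<lambda>j. F j t) ` S)))"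
    using insert by (intro continuous_on_max) auto
  thus ?case using insert by simp
qed

lemma band_size_cong:
  assumes "\<And>t. t \<in> T \<Longrightarrow> u t = u' t"
  shows "band_size T I2 r y g u = band_size T I2 r y g u'"
proof -
  have "score T y g u = score T y g u'"
    unfolding score_def using assms by (intro ext arg_cong[where f=Sup] image_cong) auto
  thus ?thesis unfolding band_size_def using assms by (intro integral_cong) auto
qed

theorem theorem3:
  fixes n m l :: nat and I1 I2 :: "nat set" and a b \<alpha> :: real
    and y :: "nat \<Rightarrow> real \<Rightarrow> real" and g :: "real \<Rightarrow> real"
  assumes part: "I1 \<union> I2 = {1..n}" "I1 \<inter> I2 = {}"
    and card1: "card I1 = m" "m \<ge> 1"
    and card2: "card I2 = l" "l \<ge> 1"
    and ab: "a < b"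
    and cont_y: "\<forall>j\<in>{1..n}. continuous_on {a..b} (y j)"
    and cont_g: "continuous_on {a..b} g"
    and alpha: "1 / (real l + 1) \<le> \<alpha>" "\<alpha> < 1"
    and Mpos: "\<forall>t\<in>{a..b}. Mfun {a..b} I2 (conf_rank l \<alpha>) y g t > 0"
  shows "band_size {a..b} I2 (conf_rank l \<alpha>) y g (\<lambda>t. 1 / (b - a))
           \<ge> band_size {a..b} I2 (conf_rank l \<alpha>) y g
               (\<lambda>t. Mfun {a..b} I2 (conf_rank l \<alpha>) y g t
                     / integral {a..b} (Mfun {a..b} I2 (conf_rank l \<alpha>) y g))
         \<and> (band_size {a..b} I2 (conf_rank l \<alpha>) y g (\<lambda>t. 1 / (b - a))
              = band_size {a..b} I2 (conf_rank l \<alpha>) y g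
                  (\<lambda>t. Mfun {a..b} I2 (conf_rank l \<alpha>) y g t
                        / integral {a..b} (Mfun {a..b} I2 (conf_rank l \<alpha>) y g))
            \<longleftrightarrow> (\<exists>c. AE t in lebesgue. t \<in> {a..b} \<longrightarrow> Mfun {a..b} I2 (conf_rank l \<alpha>) y g t = c))"
proof -
  define T where "T = {a..b}"
  define r where "r = conf_rank l \<alpha>"
  define M where "M = Mfun T I2 r y g"
  define IM where "IM = integral T M"
  define k where "k = kval T I2 r y g"
  define H2 where "H2 = H2set T I2 r y g"
  have Tne: "T \<noteq> {}" using ab by (simp add: T_def)
  have lpos: "(0::real) < real l + 1" by simp
  have r1: "1 \<le> r"
  proof -
    have "0 < (real l + 1) * (1 - \<alpha>)" using alpha by simp
    thus ?thesis unfolding r_def conf_rank_def by linarith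
  qed
  have rl: "r \<le> l"
  proof -
    have "1 \<le> (real l + 1) * \<alpha>" using alpha lpos by (simp add: divide_le_eq mult.commute)
    hence "(real l + 1) * (1 - \<alpha>) \<le> real l" by (simp add: algebra_simps)
    hence "\<lceil>(real l + 1) * (1 - \<alpha>)\<rceil> \<le> int l" by (intro ceiling_le) simp
    thus ?thesis unfolding r_def conf_rank_def by (metis nat_le_iff)
  qed
  have fin: "finite I2" using card2 by (metis card.infinite not_one_le_zero)
  have I2sub: "I2 \<subseteq> {1..n}" using part by blast
  have contD: "continuous_on T (\<lambda>t. \<bar>y j t - g t\<bar>)" if "j \<in> I2" for j
    using that I2sub cont_y cont_g unfolding T_def
    by (intro continuous_intros) auto
  have bdd: "bdd_above ((\<lambda>t. \<bar>y j t - g t\<bar>) ` T)" if "j \<in> I2" for j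
    by (rule bounded_imp_bdd_above, rule compact_imp_bounded,
        rule compact_continuous_image[OF contD[OF that]]) (simp add: T_def)
  have sd: "\<bar>y j t - g t\<bar> \<le> sup_dev T y g j" if "j \<in> I2" "t \<in> T" for j t
    unfolding sup_dev_def by (rule cSUP_upper[OF that(2) bdd[OF that(1)]])
  have kdef: "k = kth_smallest r (sup_dev T y g) I2" unfolding k_def kval_def ..
  have H2eq: "H2 = {j\<in>I2. sup_dev T y g j \<le> k}" unfolding H2_def H2set_def k_def ..
  have cardH2: "r \<le> card H2"
    unfolding H2eq kdef using card_le_kth[OF fin r1] rl card2 by simp
  have finH2: "finite H2" using fin H2eq by simp
  have H2ne: "H2 \<noteq> {}" using cardH2 r1 by auto
  have H2sub: "H2 \<subseteq> I2" using H2eq by auto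
  have Mdef: "M t = Max ((\<lambda>j. \<bar>y j t - g t\<bar>) ` H2)" for t
    unfolding M_def Mfun_def H2_def ..
  have Mle: "M t \<le> k" if "t \<in> T" for t
    unfolding Mdef using finH2 H2ne H2eq sd[OF _ that] by (auto simp: Max_le_iff intro: order_trans)
  have geM: "\<bar>y j t - g t\<bar> \<le> M t" if "j \<in> H2" for j t
    unfolding Mdef using finH2 that by (intro Max_ge) auto
  have contM: "continuous_on T M"
    unfolding Mdef[abs_def] using finH2 H2ne H2sub contD
    by (intro continuous_on_Max_fam) auto
  have Mp: "M t > 0" if "t \<in> T" for t using Mpos that unfolding M_def T_def r_def by auto
  have intM: "M integrable_on T" unfolding T_def by (rule integrable_continuous_real) (use contM T_def in simp)
  have IMpos: "IM > 0"
  proof -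
    have "IM \<ge> 0" unfolding IM_def by (rule integral_nonneg[OF intM]) (simp add: Mp less_imp_le)
    moreover have "IM \<noteq> 0"
    proof
      assume "IM = 0"
      hence i0: "integral {a..b} M = 0" unfolding IM_def T_def .
      have nn: "\<And>x. x \<in> {a..b} \<Longrightarrow> 0 \<le> M x" using Mp unfolding T_def by (simp add: less_imp_le)
      have cM: "continuous_on {a..b} M" using contM unfolding T_def .
      have "\<forall>x\<in>{a..b}. M x = 0" using integral_eq_0_iff[of a b M, OF cM ab nn] i0 by simp
      thus False using Mp[of a] ab unfolding T_def by auto
    qed
    ultimately show ?thesis by simp
  qed
  have IMle: "IM \<le> (b - a) * k"
  proof -
    have "IM \<le> integral T (\<lambda>t. k)" unfolding IM_def
      by (rule integral_le[OF intM]) (use Mle T_def in auto)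
    thus ?thesis using ab by (simp add: T_def)
  qed
  have sc0: "score T y g (\<lambda>t. 1 / (b - a)) j = (b - a) * sup_dev T y g j" if j: "j \<in> I2" for j
  proof -
    have eqf: "(\<lambda>t. \<bar>y j t - g t\<bar> / (1 / (b - a))) = (\<lambda>t. (b - a) * \<bar>y j t - g t\<bar>)" by auto
    have ba: "b - a > 0" using ab by simp
    have up: "(b - a) * \<bar>y j t - g t\<bar> \<le> (b - a) * sup_dev T y g j" if "t \<in> T" for t
      using sd[OF j that] ba by (simp add: mult_left_mono)
    have bdd2: "bdd_above ((\<lambda>t. (b - a) * \<bar>y j t - g t\<bar>) ` T)"
      using up by (intro bdd_aboveI2[where M="(b - a) * sup_dev T y g j"]) auto
    have A: "(SUP t\<in>T. (b - a) * \<bar>y j t - g t\<bar>) \<le> (b - a) * sup_dev T y g j"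
      using Tne up by (intro cSUP_least) auto
    have "sup_dev T y g j \<le> (SUP t\<in>T. (b - a) * \<bar>y j t - g t\<bar>) / (b - a)"
      unfolding sup_dev_def using Tne
    proof (intro cSUP_least)
      fix t assume "t \<in> T"
      hence "(b - a) * \<bar>y j t - g t\<bar> \<le> (SUP t\<in>T. (b - a) * \<bar>y j t - g t\<bar>)"
        by (intro cSUP_upper bdd2)
      thus "\<bar>y j t - g t\<bar> \<le> (SUP t\<in>T. (b - a) * \<bar>y j t - g t\<bar>) / (b - a)"
        using ba by (simp add: le_divide_eq mult.commute)
    qed auto
    hence B: "(b - a) * sup_dev T y g j \<le> (SUP t\<in>T. (b - a) * \<bar>y j t - g t\<bar>)"
      using ba by (simp add: le_divide_eq mult.commute)
    show ?thesis unfolding score_def eqf using A B by simp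
  qed
  have K0: "kth_smallest r (score T y g (\<lambda>t. 1 / (b - a))) I2 = (b - a) * k"
    unfolding kdef
    using kth_cong[of I2 "score T y g (\<lambda>t. 1 / (b - a))" "\<lambda>j. (b - a) * sup_dev T y g j" r] sc0
      kth_scale[of "b - a" r I2 "sup_dev T y g"] ab r1 rl card2 by simp
  have Q0: "band_size T I2 r y g (\<lambda>t. 1 / (b - a)) = 2 * (b - a) * k"
    unfolding band_size_def K0 using ab by (simp add: T_def)
  define Ku where "Ku = kth_smallest r (score T y g (\<lambda>t. M t / IM)) I2"
  have Qc: "band_size T I2 r y g (\<lambda>t. M t / IM) = 2 * Ku"
  proof -
    have "band_size T I2 r y g (\<lambda>t. M t / IM) = integral T (\<lambda>t. (2 * Ku / IM) * M t)"
      unfolding band_size_def Ku_def[symmetric] by (simp add: algebra_simps)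
    also have "\<dots> = (2 * Ku / IM) * IM" unfolding IM_def by simp
    finally show ?thesis using IMpos by simp
  qed
  have scle: "score T y g (\<lambda>t. M t / IM) j \<le> IM" if j: "j \<in> H2" for j
    unfolding score_def using Tne
  proof (intro cSUP_least)
    fix t assume t: "t \<in> T"
    have "\<bar>y j t - g t\<bar> * IM \<le> M t * IM" using geM[OF j] IMpos by (simp add: mult_right_mono)
    thus "\<bar>y j t - g t\<bar> / (M t / IM) \<le> IM" using Mp[OF t] IMpos
      by (simp add: divide_le_eq mult.commute)
  qed auto
  have Kule: "Ku \<le> IM"
    unfolding Ku_def
  proof (rule kth_le[OF fin r1])
    have "H2 \<subseteq> {h \<in> I2. score T y g (\<lambda>t. M t / IM) h \<le> IM}" using scle H2sub by auto
    hence "card H2 \<le> card {h \<in> I2. score T y g (\<lambda>t. M t / IM) h \<le> IM}"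
      using fin by (intro card_mono) auto
    thus "r \<le> card {h \<in> I2. score T y g (\<lambda>t. M t / IM) h \<le> IM}" using cardH2 by simp
  qed
  have main: "band_size T I2 r y g (\<lambda>t. M t / IM) \<le> band_size T I2 r y g (\<lambda>t. 1 / (b - a))"
    unfolding Q0 Qc mult.assoc using Kule IMle by linarith
  have iff: "band_size T I2 r y g (\<lambda>t. 1 / (b - a)) = band_size T I2 r y g (\<lambda>t. M t / IM)
      \<longleftrightarrow> (\<exists>c. AE t in lebesgue. t \<in> T \<longrightarrow> M t = c)"
  proof
    assume eq: "band_size T I2 r y g (\<lambda>t. 1 / (b - a)) = band_size T I2 r y g (\<lambda>t. M t / IM)"
    hence IMeq: "IM = (b - a) * k" unfolding Q0 Qc mult.assoc using Kule IMle by linarith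
    have "integral {a..b} (\<lambda>t. k - M t) = 0"
    proof -
      have "integral T (\<lambda>t. k - M t) = integral T (\<lambda>t. k) - IM"
        unfolding IM_def by (rule integral_diff) (use intM in \<open>auto simp: T_def\<close>)
      thus ?thesis using IMeq ab by (simp add: T_def)
    qed
    moreover have "continuous_on {a..b} (\<lambda>t. k - M t)" using contM unfolding T_def
      by (intro continuous_intros)
    moreover have "\<And>x. x \<in> {a..b} \<Longrightarrow> 0 \<le> k - M x" using Mle unfolding T_def by simp
    ultimately have "\<forall>t\<in>{a..b}. k - M t = 0" using integral_eq_0_iff[of a b "\<lambda>t. k - M t"] ab by blast
    hence "\<forall>t. t \<in> T \<longrightarrow> M t = k" by (simp add: T_def)
    thus "\<exists>c. AE t in lebesgue. t \<in> T \<longrightarrow> M t = c" by (intro exI[of _ k] always_eventually) auto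
  next
    assume "\<exists>c. AE t in lebesgue. t \<in> T \<longrightarrow> M t = c"
    then obtain c where "AE t in lebesgue. t \<in> T \<longrightarrow> M t = c" by blast
    hence "\<exists>N. negligible N \<and> {t. \<not> (t \<in> T \<longrightarrow> M t = c)} \<subseteq> N"
      by (simp only: eventually_ae_filter_negligible)
    then obtain N where N: "negligible N" "{t. \<not> (t \<in> T \<longrightarrow> M t = c)} \<subseteq> N"
      by blast
    have "((\<lambda>t. \<bar>M t - c\<bar>) has_integral 0) T"
      by (rule has_integral_spike[OF N(1), of T _ "\<lambda>t. 0"]) (use N(2) in auto)
    hence "integral {a..b} (\<lambda>t. \<bar>M t - c\<bar>) = 0" unfolding T_def by (rule integral_unique)
    moreover have "continuous_on {a..b} (\<lambda>t. \<bar>M t - c\<bar>)" using contM unfolding T_def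
      by (intro continuous_intros)
    ultimately have "\<forall>t\<in>{a..b}. \<bar>M t - c\<bar> = 0" using integral_eq_0_iff[of a b "\<lambda>t. \<bar>M t - c\<bar>"] ab by simp
    hence Mc: "\<And>t. t \<in> T \<Longrightarrow> M t = c" by (simp add: T_def)
    have cpos: "c > 0" using Mp[of a] Mc[of a] ab by (simp add: T_def)
    have "IM = integral T (\<lambda>t. c)" unfolding IM_def using Mc by (intro integral_cong) auto
    hence IMc: "IM = (b - a) * c" using ab by (simp add: T_def)
    show "band_size T I2 r y g (\<lambda>t. 1 / (b - a)) = band_size T I2 r y g (\<lambda>t. M t / IM)"
      by (rule band_size_cong) (use Mc IMc cpos in simp)
  qed
  show ?thesis using main iff unfolding T_def r_def M_def IM_def by simp
qed

end
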